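(* Fix integers $d\geq 2$ and $n\geq d+2$. Let $X=\{x_i\}_{i\in[n]}$ be a configuration in the unit sphere $S^{d-1}\subseteq\mathbb{R}^d$, and suppose there exists a partition $[n]=A\sqcup B$ with $A,B$ nonempty such that $K:=\operatorname{conv}\{x_i\}_{i\in A}\cap\operatorname{conv}\{x_i\}_{i\in B}$ is nonempty and $0\notin K$. Then $\delta(X)<1$.
   Context: $[n]=\{1,\ldots,n\}$. For a configuration $X=\{x_i\}_{i\in[n]}$ in $S^{d-1}$, $\delta(X):=\min_{j\in[n]}\operatorname{dist}(x_j,\operatorname{conv}\{x_i\}_{i\in[n]\setminus\{j\}})$, with Euclidean distance. *)

theory Defs
  imports "HOL-Analysis.Analysis"
begin

definition delta :: "nat \<Rightarrow> (nat \<Rightarrow> 'a::euclidean_space) \<Rightarrow> real" where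
  "delta n x = Min ((\<lambda>j. infdist (x j) (convex hull (x ` ({1..n} - {j})))) ` {1..n})"

end

theory Submission
  imports Defs
begin

theorem lemma3:
  fixes x :: "nat \<Rightarrow> 'a::euclidean_space" and n :: nat and A B :: "nat set"
  assumes "DIM('a) \<ge> 2"
    and "n \<ge> DIM('a) + 2"
    and "\<forall>i\<in>{1..n}. norm (x i) = 1"
    and "A \<union> B = {1..n}" and "A \<inter> B = {}" and "A \<noteq> {}" and "B \<noteq> {}"
    and "convex hull (x ` A) \<inter> convex hull (x ` B) \<noteq> {}"
    and "0 \<notin> convex hull (x ` A) \<inter> convex hull (x ` B)"
  shows "delta n x < 1"
proof -
  obtain p where pA: "p \<in> convex hull (x ` A)" and pB: "p \<in> convex hull (x ` B)"
    using assms(8) by blast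
  have p0: "p \<noteq> 0" using assms(9) pA pB by blast
  have "\<exists>j\<in>A. inner (x j) p \<ge> inner p p"
  proof (rule ccontr)
    assume "\<not> ?thesis"
    then have "x ` A \<subseteq> {y. inner y p < inner p p}" by (auto simp: not_le)
    moreover have "convex {y. inner y p < inner p p}"
      using convex_halfspace_lt[of p "inner p p"] by (simp add: inner_commute)
    ultimately have "convex hull (x ` A) \<subseteq> {y. inner y p < inner p p}"
      by (rule hull_minimal)
    then show False using pA by auto
  qed
  then obtain j where jA: "j \<in> A" and jp: "inner (x j) p \<ge> inner p p" by blast
  have jn: "j \<in> {1..n}" using jA assms(4) by blast
  have nj: "norm (x j) = 1" using assms(3) jn by blast
  have pp: "inner p p > 0" using p0 by simp
  have "(dist (x j) p)^2 = inner (x j) (x j) - 2 * inner (x j) p + inner p p"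
    by (simp add: dist_norm power2_norm_eq_inner inner_diff_left inner_diff_right inner_commute)
  also have "inner (x j) (x j) = 1" using nj by (metis norm_eq_1)
  finally have "(dist (x j) p)^2 < 1" using jp pp by linarith
  then have d1: "dist (x j) p < 1"
    using power2_less_imp_less[of "dist (x j) p" 1] by simp
  have "x ` B \<subseteq> x ` ({1..n} - {j})" using assms(4,5) jA by blast
  then have "p \<in> convex hull (x ` ({1..n} - {j}))" using pB hull_mono by blast
  then have "infdist (x j) (convex hull (x ` ({1..n} - {j}))) < 1"
    using infdist_le[of p _ "x j"] d1 by fastforce
  moreover have "delta n x \<le> infdist (x j) (convex hull (x ` ({1..n} - {j})))"
    unfolding delta_def using jn by (intro Min_le) auto
  ultimately show ?thesis by linarith
qed

end
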